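(* Let $F(\theta)$ be the vertical federated learning (SplitNN) training objective over the concatenated parameter vector $\theta=(\theta_1,\dots,\theta_K)$, where $\theta_k$ is the parameter block of party $k\in\{1,\dots,K\}$ (clients $1,\dots,K-1$ and server $K$), and assume $F(\theta)\ge 0$ for all $\theta$. Suppose: (i) ($L$-smoothness) for all $x,y$, $F(y)\le F(x)+\langle\nabla F(x),y-x\rangle+\frac{L}{2}\|y-x\|^2$; (ii) (variance) for each $k$, the mini-batch gradient $\nabla_{\theta_k}\mathcal{L}$ is an unbiased estimate of $\nabla_{\theta_k}F(\theta)$ and $\mathbb{E}\|\nabla_{\theta_k}\mathcal{L}-\nabla_{\theta_k}F(\theta)\|^2\le\Gamma$; (iii) (perturbation) for each $k$, the adversarially perturbed gradient $\nabla^a_{\theta_k}\mathcal{L}$ satisfies $\mathbb{E}\|\nabla^a_{\theta_k}\mathcal{L}-\nabla_{\theta_k}\mathcal{L}\|^2\le\delta(\rho)$, where $\delta(\rho)\ge 0$ is a constant depending on a connectivity parameter $\rho$ of the adversaries' graph. Consider the backdoored iterates $\theta_k^{(t+1)}=\theta_k^{(t)}-\eta^{(t)}\nabla^a_{\theta_k^{(t)}}\mathcal{L}$ for all $k$ and $t=0,1,\dots,T-1$, with common learning rates $\eta_1^{(t)}=\dots=\eta_K^{(t)}=\eta^{(t)}$ satisfying $0<\eta^{(t)}\le\frac{1}{4L}$. Then \[ \min_{t\in\{0,\dots,T-1\}}\mathbb{E}\|\nabla F(\theta^{(t)})\|^2\le 4\frac{F(\theta^{(0)})}{\sum_{t=0}^{T-1}\eta^{(t)}}+4\frac{\sum_{t=0}^{T-1}(\eta^{(t)})^2}{\sum_{t=0}^{T-1}\eta^{(t)}}\bigl(KL\Gamma+KL\delta(\rho)\bigr)+2K\delta(\rho).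 \]
   Context: Vertical federated learning setting: a dataset of $N$ samples whose features are partitioned among clients $k=1,\dots,K-1$; client $k$ has an embedding model $f_k(\cdot;\theta_k)$ and the server $K$ holds the labels and a top model $\phi_K(\cdot;\theta_K)$. The objective is $F(\theta)=\frac1N\sum_{i=1}^N\mathcal{L}\bigl(y_i,\phi_K(\{f_k(x_k^{(i)};\theta_k)\}_{k=1}^{K-1};\theta_K)\bigr)$ with a loss $\mathcal{L}$ (e.g. cross-entropy). In each round a mini-batch is sampled and $\nabla_{\theta_k}\mathcal{L}$ denotes the mini-batch gradient with respect to block $\theta_k$; adversarial (backdoor) clients cause the gradients actually used in updates to be perturbed versions $\nabla^a_{\theta_k}\mathcal{L}$. Expectations are over mini-batch sampling and the perturbation. *)

theory Defs
  imports "HOL-Probability.Probability"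
begin

text \<open>The full parameter vector theta lives in a Euclidean space 'p. The block
structure theta = (theta_1, ..., theta_K) is given by a map own assigning each
standard basis vector (coordinate) to the party owning it. block_proj own k x
is the k-th block of x (embedded back into 'p, other coordinates zero).\<close>

definition block_proj :: "('p::euclidean_space \<Rightarrow> nat) \<Rightarrow> nat \<Rightarrow> 'p \<Rightarrow> 'p" where
  "block_proj own k x = (\<Sum>b\<in>Basis. if own b = k then (x \<bullet> b) *\<^sub>R b else 0)"

text \<open>G is an unbiased estimate of h(X): G is integrable and its conditional
expectation given the current iterate X equals h(X) almost surely
(coordinatewise, since conditional expectation in the library is real-valued).\<close>

definition cond_unbiased ::
  "'a measure \<Rightarrow> ('a \<Rightarrow> 'p) \<Rightarrow> ('a \<Rightarrow> 'p::euclidean_space) \<Rightarrow> ('p \<Rightarrow> 'p) \<Rightarrow> bool" where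
  "cond_unbiased M X G h \<longleftrightarrow>
     (\<forall>b\<in>Basis. integrable M (\<lambda>\<omega>. G \<omega> \<bullet> b) \<and>
       (AE \<omega> in M. real_cond_exp M (vimage_algebra (space M) X borel) (\<lambda>\<omega>. G \<omega> \<bullet> b) \<omega>
                    = h (X \<omega>) \<bullet> b))"

end

theory Submission
  imports Defs
begin

lemma grad_meas:
  fixes F :: "'p::euclidean_space \<Rightarrow> real"
  assumes grad: "\<forall>x. GDERIV F x :> gradF x"
  shows "gradF \<in> borel_measurable borel"
proof -
  have cF: "continuous_on UNIV F"
    using grad by (meson continuous_at_imp_continuous_on has_derivative_continuous gderiv_def)
  hence mF[measurable]: "F \<in> borel_measurable borel" by (rule borel_measurable_continuous_onI)
  have "filterlim (\<lambda>n. inverse (real (Suc n))) (at_right 0) sequentially"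
    by (rule tendsto_imp_filterlim_at_right) (use LIMSEQ_inverse_real_of_nat in auto)
  hence sq: "filterlim (\<lambda>n. inverse (real (Suc n))) (at 0) sequentially"
    by (rule filterlim_mono) (auto simp: at_within_le_at)
  have "(\<lambda>x. gradF x \<bullet> b) \<in> borel_measurable borel" if b: "b \<in> Basis" for b
  proof (rule borel_measurable_LIMSEQ_real)
    fix x :: 'p
    have d: "((\<lambda>t. F (x + t *\<^sub>R b)) has_derivative (\<lambda>t. (t *\<^sub>R b) \<bullet> gradF x)) (at 0)"
    proof -
      have h1: "((\<lambda>t. x + t *\<^sub>R b) has_derivative (\<lambda>t. t *\<^sub>R b)) (at 0)"
        by (auto intro!: derivative_eq_intros)
      have h2: "(F has_derivative (\<lambda>h. h \<bullet> gradF x)) (at (x + 0 *\<^sub>R b))"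
        using grad[rule_format, unfolded gderiv_def] by simp
      show ?thesis using has_derivative_compose[OF h1 h2] by simp
    qed
    hence "((\<lambda>t. F (x + t *\<^sub>R b)) has_field_derivative (gradF x \<bullet> b)) (at 0)"
      by (simp add: has_field_derivative_def inner_commute mult.commute[of _ "b \<bullet> gradF x"])
    hence "((\<lambda>h. (F (x + (0 + h) *\<^sub>R b) - F (x + 0 *\<^sub>R b)) / h) \<longlongrightarrow> gradF x \<bullet> b) (at 0)"
      by (simp add: DERIV_def)
    hence "((\<lambda>h. (F (x + h *\<^sub>R b) - F x) / h) \<longlongrightarrow> gradF x \<bullet> b) (at 0)" by simp
    from filterlim_compose[OF this sq]
    show "(\<lambda>n. (F (x + inverse (real (Suc n)) *\<^sub>R b) - F x) / inverse (real (Suc n))) \<longlonglongrightarrow> gradF x \<bullet> b"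
      by simp
  next
    fix n show "(\<lambda>x. (F (x + inverse (real (Suc n)) *\<^sub>R b) - F x) / inverse (real (Suc n))) \<in> borel_measurable borel"
      by measurable
  qed
  then show ?thesis by (subst borel_measurable_euclidean_space) auto
qed

lemma block_inner:
  assumes "b \<in> Basis"
  shows "block_proj own k x \<bullet> b = (if own b = k then x \<bullet> b else 0)"
proof -
  have "block_proj own k x \<bullet> b = (\<Sum>c\<in>Basis. if own c = k then (x \<bullet> c) * (c \<bullet> b) else 0)"
    unfolding block_proj_def inner_sum_left by (intro sum.cong) auto
  also have "\<dots> = (\<Sum>c\<in>Basis. if c = b then (if own b = k then x \<bullet> b else 0) else 0)"
    using assms by (intro sum.cong) (auto simp: inner_Basis)
  also have "\<dots> = (if own b = k then x \<bullet> b else 0)" using assms by simp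
  finally show ?thesis .
qed

lemma block_diff: "block_proj own k x - block_proj own k y = block_proj own k (x - y)"
  unfolding block_proj_def sum_subtractf[symmetric] by (intro sum.cong) (auto simp: inner_diff_left scaleR_diff_left)

lemma norm2_euclid: "(norm (y::'p::euclidean_space))\<^sup>2 = (\<Sum>b\<in>Basis. (y \<bullet> b)\<^sup>2)"
  unfolding power2_norm_eq_inner by (subst euclidean_inner) (simp add: power2_eq_square)

lemma norm_blocks:
  fixes x :: "'p::euclidean_space"
  assumes "\<forall>b\<in>Basis. own b \<in> {1..K}"
  shows "(norm x)\<^sup>2 = (\<Sum>k\<in>{1..K}. (norm (block_proj own k x))\<^sup>2)"
proof -
  have "(\<Sum>k\<in>{1..K}. (norm (block_proj own k x))\<^sup>2)
      = (\<Sum>k\<in>{1..K}. \<Sum>b\<in>Basis. if own b = k then (x \<bullet> b)\<^sup>2 else 0)"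
    by (intro sum.cong refl) (simp add: norm2_euclid block_inner if_distrib[of "\<lambda>z. z\<^sup>2"] cong: if_cong)
  also have "\<dots> = (\<Sum>b\<in>Basis. \<Sum>k\<in>{1..K}. if own b = k then (x \<bullet> b)\<^sup>2 else 0)"
    by (rule sum.swap)
  also have "\<dots> = (\<Sum>b\<in>Basis. (x \<bullet> b)\<^sup>2)"
    using assms by (intro sum.cong refl) (auto simp: sum.delta')
  finally show ?thesis by (simp add: norm2_euclid)
qed

lemma pw_real:
  fixes Fy Fx \<eta> L na ae ad nd ne N nae :: real
  assumes "Fy \<le> Fx + - \<eta> * (na + ae + ad) + L / 2 * (\<eta>\<^sup>2 * N)"
    "\<eta> * (- (na + nd) / 2) \<le> \<eta> * ad"
    "L / 2 * (\<eta>\<^sup>2 * N) \<le> L / 2 * (\<eta>\<^sup>2 * (2 * (nae + nd)))"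
    "nae = na + 2 * ae + ne"
  shows "Fy \<le> Fx - \<eta> / 2 * na - \<eta> * ae + \<eta> / 2 * nd + L * \<eta>\<^sup>2 * (na + 2 * ae + ne + nd)"
  using assms by (simp add: algebra_simps)

lemma abs_sq_le: "\<bar>x::real\<bar> \<le> y \<Longrightarrow> x\<^sup>2 \<le> y\<^sup>2"
  by (metis abs_ge_zero power2_abs power_mono)

lemma pw:
  fixes a e d :: "'a::real_inner" and Fx Fy \<eta> L :: real
  assumes "\<eta> \<ge> 0" "L \<ge> 0"
    and "Fy \<le> Fx + a \<bullet> (- (\<eta> *\<^sub>R (a + e + d))) + L / 2 * (norm (- (\<eta> *\<^sub>R (a + e + d))))\<^sup>2"
  shows "Fy \<le> Fx - \<eta> / 2 * (norm a)\<^sup>2 - \<eta> * (a \<bullet> e) + \<eta> / 2 * (norm d)\<^sup>2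
              + L * \<eta>\<^sup>2 * ((norm a)\<^sup>2 + 2 * (a \<bullet> e) + (norm e)\<^sup>2 + (norm d)\<^sup>2)"
proof -
  have n1: "(norm (- (\<eta> *\<^sub>R (a + e + d))))\<^sup>2 = \<eta>\<^sup>2 * (norm (a + e + d))\<^sup>2"
    by (simp add: power_mult_distrib)
  have p1: "(norm (a + e + d))\<^sup>2 \<le> 2 * ((norm (a + e))\<^sup>2 + (norm d)\<^sup>2)"
  proof -
    have "0 \<le> (norm (a + e - d))\<^sup>2" by simp
    thus ?thesis by (simp add: power2_norm_eq_inner inner_add_left inner_add_right inner_diff_left inner_diff_right inner_commute)
  qed
  have p2: "a \<bullet> d \<ge> - ((norm a)\<^sup>2 + (norm d)\<^sup>2) / 2"
  proof -
    have "0 \<le> (norm (a + d))\<^sup>2" by simp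
    thus ?thesis by (simp add: power2_norm_eq_inner inner_add_left inner_add_right inner_commute)
  qed
  have p3: "(norm (a + e))\<^sup>2 = (norm a)\<^sup>2 + 2 * (a \<bullet> e) + (norm e)\<^sup>2"
    by (simp add: power2_norm_eq_inner inner_add_left inner_add_right inner_commute)
  have i1: "a \<bullet> (- (\<eta> *\<^sub>R (a + e + d))) = - \<eta> * ((norm a)\<^sup>2 + a \<bullet> e + a \<bullet> d)"
    by (simp add: inner_add_right power2_norm_eq_inner algebra_simps)
  have q1: "\<eta> * (a \<bullet> d) \<ge> \<eta> * (- ((norm a)\<^sup>2 + (norm d)\<^sup>2) / 2)"
    using p2 assms(1) by (rule mult_left_mono)
  have q2: "L / 2 * (\<eta>\<^sup>2 * (norm (a + e + d))\<^sup>2) \<le> L / 2 * (\<eta>\<^sup>2 * (2 * ((norm (a + e))\<^sup>2 + (norm d)\<^sup>2)))"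
    using p1 assms(2) by (intro mult_left_mono) auto
  have h: "Fy \<le> Fx + (- \<eta> * ((norm a)\<^sup>2 + a \<bullet> e + a \<bullet> d)) + L / 2 * (\<eta>\<^sup>2 * (norm (a + e + d))\<^sup>2)"
    using assms(3) unfolding n1 i1 .
  show ?thesis by (rule pw_real[OF h q1 q2 p3])
qed

lemma step:
  fixes M :: "'w measure" and F :: "'p::euclidean_space \<Rightarrow> real"
    and gradF :: "'p \<Rightarrow> 'p" and X Y G GA :: "'w \<Rightarrow> 'p"
  assumes prob: "prob_space M"
    and Xm[measurable]: "X \<in> borel_measurable M"
    and Gm[measurable]: "G \<in> borel_measurable M"
    and GAm[measurable]: "GA \<in> borel_measurable M"
    and Y: "\<forall>\<omega>\<in>space M. Y \<omega> = X \<omega> - \<eta> *\<^sub>R GA \<omega>"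
    and eta: "0 < \<eta>" "\<eta> \<le> 1 / (4 * L)" and L: "L > 0"
    and smooth: "\<forall>x y. F y \<le> F x + gradF x \<bullet> (y - x) + L / 2 * (norm (y - x))\<^sup>2"
    and Fm[measurable]: "F \<in> borel_measurable borel"
    and gm[measurable]: "gradF \<in> borel_measurable borel"
    and F_nonneg: "\<forall>x. F x \<ge> 0"
    and FXi: "integrable M (\<lambda>\<omega>. F (X \<omega>))"
    and aint: "integrable M (\<lambda>\<omega>. (norm (gradF (X \<omega>)))\<^sup>2)"
    and unb: "\<forall>b\<in>Basis. AE \<omega> in M. real_cond_exp M (vimage_algebra (space M) X borel) (\<lambda>\<omega>. G \<omega> \<bullet> b) \<omega> = gradF (X \<omega>) \<bullet> b"
    and eint: "integrable M (\<lambda>\<omega>. (norm (G \<omega> - gradF (X \<omega>)))\<^sup>2)"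
    and eb: "(\<integral>\<omega>. (norm (G \<omega> - gradF (X \<omega>)))\<^sup>2 \<partial>M) \<le> A"
    and dint: "integrable M (\<lambda>\<omega>. (norm (GA \<omega> - G \<omega>))\<^sup>2)"
    and db: "(\<integral>\<omega>. (norm (GA \<omega> - G \<omega>))\<^sup>2 \<partial>M) \<le> D"
  shows "integrable M (\<lambda>\<omega>. F (Y \<omega>))"
    and "\<eta> / 4 * (\<integral>\<omega>. (norm (gradF (X \<omega>)))\<^sup>2 \<partial>M)
          \<le> (\<integral>\<omega>. F (X \<omega>) \<partial>M) - (\<integral>\<omega>. F (Y \<omega>) \<partial>M) + L * \<eta>\<^sup>2 * (A + D) + \<eta> / 2 * D"
proof -
  interpret prob_space M by (rule prob)
  let ?S = "vimage_algebra (space M) X borel"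
  have "finite_measure_subalgebra M ?S"
  proof unfold_locales
    show "subalgebra M ?S" unfolding subalgebra_def
      using sets_image_in_sets[of M "space M" X borel] Xm by auto
  qed
  then interpret S: sigma_finite_subalgebra M ?S by (rule finite_measure_subalgebra_is_sigma_finite)
  define a where "a = (\<lambda>\<omega>. gradF (X \<omega>))"
  define e where "e = (\<lambda>\<omega>. G \<omega> - gradF (X \<omega>))"
  define d where "d = (\<lambda>\<omega>. GA \<omega> - G \<omega>)"
  have am[measurable]: "a \<in> borel_measurable M" unfolding a_def by measurable
  have em[measurable]: "e \<in> borel_measurable M" unfolding e_def by measurable
  have dm[measurable]: "d \<in> borel_measurable M" unfolding d_def by measurable
  have ai: "integrable M (\<lambda>\<omega>. (norm (a \<omega>))\<^sup>2)" using aint unfolding a_def .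
  have ei: "integrable M (\<lambda>\<omega>. (norm (e \<omega>))\<^sup>2)" using eint unfolding e_def .
  have di: "integrable M (\<lambda>\<omega>. (norm (d \<omega>))\<^sup>2)" using dint unfolding d_def .
  have aei_sum: "integrable M (\<lambda>\<omega>. (norm (a \<omega>))\<^sup>2 + (norm (e \<omega>))\<^sup>2)" using ai ei by simp
  have prodb: "\<bar>u * v\<bar> \<le> u\<^sup>2 + v\<^sup>2" for u v :: real
  proof -
    have "0 \<le> (\<bar>u\<bar> - \<bar>v\<bar>)\<^sup>2" by simp
    hence "2 * (\<bar>u\<bar> * \<bar>v\<bar>) \<le> u\<^sup>2 + v\<^sup>2" by (simp add: power2_eq_square algebra_simps)
    moreover have "0 \<le> \<bar>u\<bar> * \<bar>v\<bar>" by simp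
    ultimately show ?thesis unfolding abs_mult by linarith
  qed
  have aei: "integrable M (\<lambda>\<omega>. a \<omega> \<bullet> e \<omega>)"
  proof (rule Bochner_Integration.integrable_bound[OF aei_sum])
    show "AE \<omega> in M. norm (a \<omega> \<bullet> e \<omega>) \<le> norm ((norm (a \<omega>))\<^sup>2 + (norm (e \<omega>))\<^sup>2)"
    proof (intro AE_I2)
      fix \<omega>
      have "\<bar>a \<omega> \<bullet> e \<omega>\<bar> \<le> norm (a \<omega>) * norm (e \<omega>)" by (rule Cauchy_Schwarz_ineq2)
      also have "\<dots> \<le> (norm (a \<omega>))\<^sup>2 + (norm (e \<omega>))\<^sup>2" using prodb[of "norm (a \<omega>)" "norm (e \<omega>)"] by simp
      finally show "norm (a \<omega> \<bullet> e \<omega>) \<le> norm ((norm (a \<omega>))\<^sup>2 + (norm (e \<omega>))\<^sup>2)" by simp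
    qed
  qed measurable
  have comp0: "(\<integral>\<omega>. (a \<omega> \<bullet> b) * (e \<omega> \<bullet> b) \<partial>M) = 0"
    and compi: "integrable M (\<lambda>\<omega>. (a \<omega> \<bullet> b) * (e \<omega> \<bullet> b))" if b: "b \<in> Basis" for b
  proof -
    have i1: "integrable M (\<lambda>\<omega>. (a \<omega> \<bullet> b) * (e \<omega> \<bullet> b))"
    proof (rule Bochner_Integration.integrable_bound[OF aei_sum])
      show "AE \<omega> in M. norm ((a \<omega> \<bullet> b) * (e \<omega> \<bullet> b)) \<le> norm ((norm (a \<omega>))\<^sup>2 + (norm (e \<omega>))\<^sup>2)"
      proof (intro AE_I2)
        fix \<omega>
        have "\<bar>(a \<omega> \<bullet> b) * (e \<omega> \<bullet> b)\<bar> \<le> (a \<omega> \<bullet> b)\<^sup>2 + (e \<omega> \<bullet> b)\<^sup>2" by (rule prodb)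
        also have "\<dots> \<le> (norm (a \<omega>))\<^sup>2 + (norm (e \<omega>))\<^sup>2"
          using Basis_le_norm[OF b, of "a \<omega>"] Basis_le_norm[OF b, of "e \<omega>"]
          by (intro add_mono abs_sq_le)
        finally show "norm ((a \<omega> \<bullet> b) * (e \<omega> \<bullet> b)) \<le> norm ((norm (a \<omega>))\<^sup>2 + (norm (e \<omega>))\<^sup>2)" by simp
      qed
    qed measurable
    have i2: "integrable M (\<lambda>\<omega>. (a \<omega> \<bullet> b) * (a \<omega> \<bullet> b))"
    proof (rule Bochner_Integration.integrable_bound[OF ai])
      show "AE \<omega> in M. norm ((a \<omega> \<bullet> b) * (a \<omega> \<bullet> b)) \<le> norm ((norm (a \<omega>))\<^sup>2)"
        using abs_sq_le[OF Basis_le_norm[OF b]] by (intro AE_I2) (simp add: power2_eq_square[symmetric])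
    qed measurable
    have eqp: "(a \<omega> \<bullet> b) * (G \<omega> \<bullet> b) = (a \<omega> \<bullet> b) * (e \<omega> \<bullet> b) + (a \<omega> \<bullet> b) * (a \<omega> \<bullet> b)" for \<omega>
      by (simp add: e_def a_def inner_diff_left algebra_simps)
    have i3: "integrable M (\<lambda>\<omega>. (a \<omega> \<bullet> b) * (G \<omega> \<bullet> b))"
      unfolding eqp using i1 i2 by simp
    have fm: "(\<lambda>\<omega>. a \<omega> \<bullet> b) \<in> borel_measurable ?S"
      unfolding a_def
    proof (rule measurable_compose[OF measurable_vimage_algebra1])
      show "X \<in> space M \<rightarrow> space borel" by simp
      show "(\<lambda>x. gradF x \<bullet> b) \<in> borel_measurable borel" by measurable
    qed
    have "(\<integral>\<omega>. (a \<omega> \<bullet> b) * real_cond_exp M ?S (\<lambda>\<omega>. G \<omega> \<bullet> b) \<omega> \<partial>M) = (\<integral>\<omega>. (a \<omega> \<bullet> b) * (G \<omega> \<bullet> b) \<partial>M)"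
      by (rule S.real_cond_exp_intg(2)[OF i3 fm]) measurable
    moreover have "(\<integral>\<omega>. (a \<omega> \<bullet> b) * real_cond_exp M ?S (\<lambda>\<omega>. G \<omega> \<bullet> b) \<omega> \<partial>M) = (\<integral>\<omega>. (a \<omega> \<bullet> b) * (a \<omega> \<bullet> b) \<partial>M)"
      using unb b by (intro integral_cong_AE) (auto simp: a_def)
    ultimately have "(\<integral>\<omega>. (a \<omega> \<bullet> b) * (G \<omega> \<bullet> b) \<partial>M) = (\<integral>\<omega>. (a \<omega> \<bullet> b) * (a \<omega> \<bullet> b) \<partial>M)" by simp
    then show "(\<integral>\<omega>. (a \<omega> \<bullet> b) * (e \<omega> \<bullet> b) \<partial>M) = 0"
      unfolding eqp using i1 i2 by simp
    show "integrable M (\<lambda>\<omega>. (a \<omega> \<bullet> b) * (e \<omega> \<bullet> b))" by (rule i1)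
  qed
  have ae0: "(\<integral>\<omega>. a \<omega> \<bullet> e \<omega> \<partial>M) = 0"
  proof -
    have "(\<integral>\<omega>. a \<omega> \<bullet> e \<omega> \<partial>M) = (\<integral>\<omega>. (\<Sum>b\<in>Basis. (a \<omega> \<bullet> b) * (e \<omega> \<bullet> b)) \<partial>M)"
      by (rule Bochner_Integration.integral_cong[OF refl]) (rule euclidean_inner)
    also have "\<dots> = (\<Sum>b\<in>Basis. (\<integral>\<omega>. (a \<omega> \<bullet> b) * (e \<omega> \<bullet> b) \<partial>M))"
      by (rule Bochner_Integration.integral_sum) (auto intro: compi)
    also have "\<dots> = 0" by (simp add: comp0)
    finally show ?thesis .
  qed
  have Ym: "(\<lambda>\<omega>. F (X \<omega> - \<eta> *\<^sub>R GA \<omega>)) \<in> borel_measurable M" by measurable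
  have FYm: "(\<lambda>\<omega>. F (Y \<omega>)) \<in> borel_measurable M"
    by (rule measurable_cong[THEN iffD1, OF _ Ym]) (simp add: Y)
  define R where "R = (\<lambda>\<omega>. F (X \<omega>) - \<eta> / 2 * (norm (a \<omega>))\<^sup>2 - \<eta> * (a \<omega> \<bullet> e \<omega>) + \<eta> / 2 * (norm (d \<omega>))\<^sup>2
              + L * \<eta>\<^sup>2 * ((norm (a \<omega>))\<^sup>2 + 2 * (a \<omega> \<bullet> e \<omega>) + (norm (e \<omega>))\<^sup>2 + (norm (d \<omega>))\<^sup>2))"
  have pwR: "F (Y \<omega>) \<le> R \<omega>" if w: "\<omega> \<in> space M" for \<omega>
  proof -
    have ga: "GA \<omega> = a \<omega> + e \<omega> + d \<omega>" by (simp add: a_def e_def d_def)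
    have yx: "Y \<omega> - X \<omega> = - (\<eta> *\<^sub>R (a \<omega> + e \<omega> + d \<omega>))" using Y w ga by simp
    have "F (Y \<omega>) \<le> F (X \<omega>) + a \<omega> \<bullet> (- (\<eta> *\<^sub>R (a \<omega> + e \<omega> + d \<omega>)))
        + L / 2 * (norm (- (\<eta> *\<^sub>R (a \<omega> + e \<omega> + d \<omega>))))\<^sup>2"
    proof -
      have "F (Y \<omega>) \<le> F (X \<omega>) + gradF (X \<omega>) \<bullet> (Y \<omega> - X \<omega>) + L / 2 * (norm (Y \<omega> - X \<omega>))\<^sup>2"
        using smooth by blast
      then show ?thesis unfolding yx a_def .
    qed
    from pw[OF _ _ this] eta L show ?thesis unfolding R_def by simp
  qed
  have Ri: "integrable M R" unfolding R_def
    by (intro Bochner_Integration.integrable_add Bochner_Integration.integrable_diff integrable_mult_right FXi ai ei di aei)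
  show FYi: "integrable M (\<lambda>\<omega>. F (Y \<omega>))"
  proof (rule Bochner_Integration.integrable_bound[OF Ri FYm])
    show "AE \<omega> in M. norm (F (Y \<omega>)) \<le> norm (R \<omega>)"
      using pwR F_nonneg by (intro AE_I2) (smt (verit) real_norm_def)
  qed
  have le1: "(\<integral>\<omega>. F (Y \<omega>) \<partial>M) \<le> (\<integral>\<omega>. R \<omega> \<partial>M)"
    by (rule integral_mono[OF FYi Ri pwR])
  define Ia where "Ia = (\<integral>\<omega>. (norm (a \<omega>))\<^sup>2 \<partial>M)"
  define Ie where "Ie = (\<integral>\<omega>. (norm (e \<omega>))\<^sup>2 \<partial>M)"
  define Id where "Id = (\<integral>\<omega>. (norm (d \<omega>))\<^sup>2 \<partial>M)"
  have intR: "(\<integral>\<omega>. R \<omega> \<partial>M) = (\<integral>\<omega>. F (X \<omega>) \<partial>M) - \<eta> / 2 * Ia - \<eta> * 0 + \<eta> / 2 * Id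
      + L * \<eta>\<^sup>2 * (Ia + 2 * 0 + Ie + Id)"
    unfolding R_def Ia_def Ie_def Id_def ae0[symmetric] using FXi ai ei di aei
    by (simp add: Bochner_Integration.integral_add Bochner_Integration.integral_diff)
  have Ia0: "Ia \<ge> 0" unfolding Ia_def by (rule Bochner_Integration.integral_nonneg) simp
  have Ie0: "Ie \<ge> 0" unfolding Ie_def by (rule Bochner_Integration.integral_nonneg) simp
  have Id0: "Id \<ge> 0" unfolding Id_def by (rule Bochner_Integration.integral_nonneg) simp
  have IeA: "Ie \<le> A" using eb unfolding Ie_def e_def .
  have IdD: "Id \<le> D" using db unfolding Id_def d_def .
  have Le: "L * \<eta> \<le> 1 / 4" using eta L by (simp add: field_simps)
  have Le2: "L * \<eta>\<^sup>2 \<le> \<eta> / 4"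
  proof -
    have "L * \<eta>\<^sup>2 = (L * \<eta>) * \<eta>" by (simp add: power2_eq_square)
    also have "\<dots> \<le> 1 / 4 * \<eta>" using Le eta by (intro mult_right_mono) auto
    finally show ?thesis by simp
  qed
  have LL: "L * \<eta>\<^sup>2 \<ge> 0" using L by simp
  have f1: "L * \<eta>\<^sup>2 * Ia \<le> \<eta> / 4 * Ia" using Le2 Ia0 by (rule mult_right_mono)
  have f2: "L * \<eta>\<^sup>2 * Ie \<le> L * \<eta>\<^sup>2 * A" using IeA LL by (rule mult_left_mono)
  have f3: "L * \<eta>\<^sup>2 * Id \<le> L * \<eta>\<^sup>2 * D" using IdD LL by (rule mult_left_mono)
  have f4: "\<eta> / 2 * Id \<le> \<eta> / 2 * D" using IdD eta by (intro mult_left_mono) auto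
  have "(\<integral>\<omega>. F (Y \<omega>) \<partial>M) \<le> (\<integral>\<omega>. F (X \<omega>) \<partial>M) - \<eta> / 2 * Ia + \<eta> / 2 * Id
      + (L * \<eta>\<^sup>2 * Ia + L * \<eta>\<^sup>2 * Ie + L * \<eta>\<^sup>2 * Id)"
    using le1 unfolding intR by (simp add: algebra_simps)
  then have "\<eta> / 4 * Ia \<le> (\<integral>\<omega>. F (X \<omega>) \<partial>M) - (\<integral>\<omega>. F (Y \<omega>) \<partial>M) + (L * \<eta>\<^sup>2 * A + L * \<eta>\<^sup>2 * D) + \<eta> / 2 * D"
    using f1 f2 f3 f4 by linarith
  then show "\<eta> / 4 * (\<integral>\<omega>. (norm (gradF (X \<omega>)))\<^sup>2 \<partial>M)
          \<le> (\<integral>\<omega>. F (X \<omega>) \<partial>M) - (\<integral>\<omega>. F (Y \<omega>) \<partial>M) + L * \<eta>\<^sup>2 * (A + D) + \<eta> / 2 * D"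
    unfolding Ia_def a_def by (simp add: distrib_left)
qed
lemma F_meas:
  fixes F :: "'p::euclidean_space \<Rightarrow> real"
  assumes grad: "\<forall>x. GDERIV F x :> gradF x"
  shows "F \<in> borel_measurable borel"
proof -
  have cF: "continuous_on UNIV F"
    using grad by (meson continuous_at_imp_continuous_on has_derivative_continuous gderiv_def)
  thus ?thesis by (rule borel_measurable_continuous_onI)
qed

theorem theorem1:
  fixes M :: "'w measure"
    and F :: "'p::euclidean_space \<Rightarrow> real"
    and gradF :: "'p \<Rightarrow> 'p"
    and K :: nat and own :: "'p \<Rightarrow> nat"
    and L \<Gamma> :: real
    and \<delta> :: "'r \<Rightarrow> real" and \<rho> :: 'r
    and \<theta> :: "nat \<Rightarrow> 'w \<Rightarrow> 'p" and \<theta>0 :: 'p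
    and g ga :: "nat \<Rightarrow> 'w \<Rightarrow> 'p"
    and \<eta> :: "nat \<Rightarrow> real" and T :: nat
  assumes prob: "prob_space M"
    and K: "K \<ge> 2"
    and ownership: "\<forall>b\<in>Basis. own b \<in> {1..K}"
    and F_nonneg: "\<forall>x. F x \<ge> 0"
    and grad: "\<forall>x. GDERIV F x :> gradF x"
    and L_pos: "L > 0"
    and smooth: "\<forall>x y. F y \<le> F x + gradF x \<bullet> (y - x) + L / 2 * (norm (y - x))\<^sup>2"
    and delta_nonneg: "\<delta> \<rho> \<ge> 0"
    and T: "T > 0"
    and init: "\<forall>\<omega>\<in>space M. \<theta> 0 \<omega> = \<theta>0"
    and iter: "\<forall>t<T. \<forall>\<omega>\<in>space M. \<theta> (Suc t) \<omega> = \<theta> t \<omega> - \<eta> t *\<^sub>R ga t \<omega>"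
    and lr: "\<forall>t<T. 0 < \<eta> t \<and> \<eta> t \<le> 1 / (4 * L)"
    and g_meas: "\<forall>t<T. g t \<in> borel_measurable M"
    and ga_meas: "\<forall>t<T. ga t \<in> borel_measurable M"
    and unbiased: "\<forall>t<T. \<forall>k\<in>{1..K}.
        cond_unbiased M (\<theta> t) (\<lambda>\<omega>. block_proj own k (g t \<omega>)) (\<lambda>x. block_proj own k (gradF x))"
    and var_int: "\<forall>t<T. \<forall>k\<in>{1..K}.
        integrable M (\<lambda>\<omega>. (norm (block_proj own k (g t \<omega>) - block_proj own k (gradF (\<theta> t \<omega>))))\<^sup>2)"
    and var: "\<forall>t<T. \<forall>k\<in>{1..K}.
        (\<integral>\<omega>. (norm (block_proj own k (g t \<omega>) - block_proj own k (gradF (\<theta> t \<omega>))))\<^sup>2 \<partial>M) \<le> \<Gamma>"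
    and pert_int: "\<forall>t<T. \<forall>k\<in>{1..K}.
        integrable M (\<lambda>\<omega>. (norm (block_proj own k (ga t \<omega>) - block_proj own k (g t \<omega>)))\<^sup>2)"
    and pert: "\<forall>t<T. \<forall>k\<in>{1..K}.
        (\<integral>\<omega>. (norm (block_proj own k (ga t \<omega>) - block_proj own k (g t \<omega>)))\<^sup>2 \<partial>M) \<le> \<delta> \<rho>"
  shows "Min ((\<lambda>t. \<integral>\<omega>. (norm (gradF (\<theta> t \<omega>)))\<^sup>2 \<partial>M) ` {..<T})
    \<le> 4 * F \<theta>0 / (\<Sum>t<T. \<eta> t)
      + 4 * (\<Sum>t<T. (\<eta> t)\<^sup>2) / (\<Sum>t<T. \<eta> t) * (real K * L * \<Gamma> + real K * L * \<delta> \<rho>)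
      + 2 * real K * \<delta> \<rho>"
proof -
  interpret prob_space M by (rule prob)
  have gm[measurable]: "gradF \<in> borel_measurable borel" by (rule grad_meas[OF grad])
  have Fm[measurable]: "F \<in> borel_measurable borel" by (rule F_meas[OF grad])
  define S where "S = (\<Sum>t<T. \<eta> t)"
  define S2 where "S2 = (\<Sum>t<T. (\<eta> t)\<^sup>2)"
  define a where "a = (\<lambda>t. \<integral>\<omega>. (norm (gradF (\<theta> t \<omega>)))\<^sup>2 \<partial>M)"
  define Ef where "Ef = (\<lambda>t. \<integral>\<omega>. F (\<theta> t \<omega>) \<partial>M)"
  have Spos: "S > 0" unfolding S_def using T lr by (intro sum_pos) auto
  have S2nn: "S2 \<ge> 0" unfolding S2_def by (intro sum_nonneg) auto
  have K1: "(1::nat) \<in> {1..K}" using K by simp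
  have Gam: "\<Gamma> \<ge> 0"
  proof -
    have "0 \<le> (\<integral>\<omega>. (norm (block_proj own 1 (g 0 \<omega>) - block_proj own 1 (gradF (\<theta> 0 \<omega>))))\<^sup>2 \<partial>M)"
      by (rule Bochner_Integration.integral_nonneg) simp
    also have "\<dots> \<le> \<Gamma>" using var T K1 by blast
    finally show ?thesis .
  qed
  have F0: "F \<theta>0 \<ge> 0" using F_nonneg by simp
  have RHSnn: "0 \<le> 4 * F \<theta>0 / S + 4 * S2 / S * (real K * L * \<Gamma> + real K * L * \<delta> \<rho>) + 2 * real K * \<delta> \<rho>"
    using Spos S2nn F0 Gam L_pos delta_nonneg by (intro add_nonneg_nonneg mult_nonneg_nonneg divide_nonneg_pos) auto
  have fin: "finite (a ` {..<T})" "a ` {..<T} \<noteq> {}" using T by auto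
  have minle: "Min (a ` {..<T}) \<le> a t" if "t < T" for t using fin that by (intro Min_le) auto
  have thm_meas: "\<theta> t \<in> borel_measurable M" if "t \<le> T" for t
    using that
  proof (induction t)
    case 0
    show ?case by (rule measurable_cong[THEN iffD2, OF _ measurable_const]) (use init in auto)
  next
    case (Suc t)
    hence tT: "t < T" by simp
    have m1: "\<theta> t \<in> borel_measurable M" using Suc by simp
    have m2: "ga t \<in> borel_measurable M" using ga_meas tT by simp
    have "(\<lambda>\<omega>. \<theta> t \<omega> - \<eta> t *\<^sub>R ga t \<omega>) \<in> borel_measurable M" using m1 m2 by measurable
    then show ?case by (rule measurable_cong[THEN iffD1, rotated]) (use iter tT in auto)
  qed
  show ?thesis
  proof (cases "\<exists>t<T. \<not> integrable M (\<lambda>\<omega>. (norm (gradF (\<theta> t \<omega>)))\<^sup>2)")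
    case True
    then obtain t where t: "t < T" "\<not> integrable M (\<lambda>\<omega>. (norm (gradF (\<theta> t \<omega>)))\<^sup>2)" by blast
    have "a t = 0" unfolding a_def using t(2) by (rule not_integrable_integral_eq)
    with minle[OF t(1)] RHSnn show ?thesis unfolding a_def S_def S2_def by simp
  next
    case False
    hence aint: "\<And>t. t < T \<Longrightarrow> integrable M (\<lambda>\<omega>. (norm (gradF (\<theta> t \<omega>)))\<^sup>2)" by blast
    have blk_sum: "(norm (x - y))\<^sup>2 = (\<Sum>k\<in>{1..K}. (norm (block_proj own k x - block_proj own k y))\<^sup>2)" for x y :: 'p
      unfolding block_diff by (rule norm_blocks[OF ownership])
    have stp: "integrable M (\<lambda>\<omega>. F (\<theta> (Suc t) \<omega>)) \<and>
        \<eta> t / 4 * a t \<le> Ef t - Ef (Suc t) + L * (\<eta> t)\<^sup>2 * (real K * \<Gamma> + real K * \<delta> \<rho>) + \<eta> t / 2 * (real K * \<delta> \<rho>)"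
      if tT: "t < T" and FXi: "integrable M (\<lambda>\<omega>. F (\<theta> t \<omega>))" for t
    proof -
      have Xm: "\<theta> t \<in> borel_measurable M" using thm_meas tT by simp
      have Gm: "g t \<in> borel_measurable M" using g_meas tT by simp
      have GAm: "ga t \<in> borel_measurable M" using ga_meas tT by simp
      have unb: "\<forall>b\<in>Basis. AE \<omega> in M. real_cond_exp M (vimage_algebra (space M) (\<theta> t) borel) (\<lambda>\<omega>. g t \<omega> \<bullet> b) \<omega> = gradF (\<theta> t \<omega>) \<bullet> b"
      proof
        fix b :: 'p assume b: "b \<in> Basis"
        have "own b \<in> {1..K}" using ownership b by blast
        hence cu: "cond_unbiased M (\<theta> t) (\<lambda>\<omega>. block_proj own (own b) (g t \<omega>)) (\<lambda>x. block_proj own (own b) (gradF x))"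
          using unbiased tT by blast
        have e1: "(\<lambda>\<omega>. block_proj own (own b) (g t \<omega>) \<bullet> b) = (\<lambda>\<omega>. g t \<omega> \<bullet> b)"
          using b by (simp add: block_inner)
        show "AE \<omega> in M. real_cond_exp M (vimage_algebra (space M) (\<theta> t) borel) (\<lambda>\<omega>. g t \<omega> \<bullet> b) \<omega> = gradF (\<theta> t \<omega>) \<bullet> b"
        proof -
          have "AE \<omega> in M. real_cond_exp M (vimage_algebra (space M) (\<theta> t) borel) (\<lambda>\<omega>. block_proj own (own b) (g t \<omega>) \<bullet> b) \<omega> = block_proj own (own b) (gradF (\<theta> t \<omega>)) \<bullet> b"
            using cu b unfolding cond_unbiased_def by blast
          then show ?thesis unfolding e1 using b by (simp add: block_inner)
        qed
      qed
      have bs1: "(\<lambda>\<omega>. (norm (g t \<omega> - gradF (\<theta> t \<omega>)))\<^sup>2) = (\<lambda>\<omega>. \<Sum>k\<in>{1..K}. (norm (block_proj own k (g t \<omega>) - block_proj own k (gradF (\<theta> t \<omega>))))\<^sup>2)"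
        by (rule ext) (rule blk_sum)
      have bs2: "(\<lambda>\<omega>. (norm (ga t \<omega> - g t \<omega>))\<^sup>2) = (\<lambda>\<omega>. \<Sum>k\<in>{1..K}. (norm (block_proj own k (ga t \<omega>) - block_proj own k (g t \<omega>)))\<^sup>2)"
        by (rule ext) (rule blk_sum)
      have eint: "integrable M (\<lambda>\<omega>. (norm (g t \<omega> - gradF (\<theta> t \<omega>)))\<^sup>2)"
        unfolding bs1 using var_int tT by (intro Bochner_Integration.integrable_sum) auto
      have eb: "(\<integral>\<omega>. (norm (g t \<omega> - gradF (\<theta> t \<omega>)))\<^sup>2 \<partial>M) \<le> real K * \<Gamma>"
      proof -
        have "(\<integral>\<omega>. (norm (g t \<omega> - gradF (\<theta> t \<omega>)))\<^sup>2 \<partial>M)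
          = (\<Sum>k\<in>{1..K}. \<integral>\<omega>. (norm (block_proj own k (g t \<omega>) - block_proj own k (gradF (\<theta> t \<omega>))))\<^sup>2 \<partial>M)"
          unfolding bs1 using var_int tT by (intro Bochner_Integration.integral_sum) auto
        also have "\<dots> \<le> (\<Sum>k\<in>{1..K}. \<Gamma>)" using var tT by (intro sum_mono) auto
        finally show ?thesis by simp
      qed
      have dint: "integrable M (\<lambda>\<omega>. (norm (ga t \<omega> - g t \<omega>))\<^sup>2)"
        unfolding bs2 using pert_int tT by (intro Bochner_Integration.integrable_sum) auto
      have db: "(\<integral>\<omega>. (norm (ga t \<omega> - g t \<omega>))\<^sup>2 \<partial>M) \<le> real K * \<delta> \<rho>"
      proof -
        have "(\<integral>\<omega>. (norm (ga t \<omega> - g t \<omega>))\<^sup>2 \<partial>M)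
          = (\<Sum>k\<in>{1..K}. \<integral>\<omega>. (norm (block_proj own k (ga t \<omega>) - block_proj own k (g t \<omega>)))\<^sup>2 \<partial>M)"
          unfolding bs2 using pert_int tT by (intro Bochner_Integration.integral_sum) auto
        also have "\<dots> \<le> (\<Sum>k\<in>{1..K}. \<delta> \<rho>)" using pert tT by (intro sum_mono) auto
        finally show ?thesis by simp
      qed
      have Y: "\<forall>\<omega>\<in>space M. \<theta> (Suc t) \<omega> = \<theta> t \<omega> - \<eta> t *\<^sub>R ga t \<omega>" using iter tT by blast
      have et: "0 < \<eta> t" "\<eta> t \<le> 1 / (4 * L)" using lr tT by auto
      note R = step[OF prob Xm Gm GAm Y et L_pos smooth Fm gm F_nonneg FXi aint[OF tT] unb eint eb dint db]
      show ?thesis using R unfolding a_def Ef_def by simp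
    qed
    have Fint: "integrable M (\<lambda>\<omega>. F (\<theta> t \<omega>))" if "t \<le> T" for t
      using that
    proof (induction t)
      case 0
      show ?case by (rule Bochner_Integration.integrable_cong[THEN iffD2, OF refl _ integrable_const]) (use init in auto)
    next
      case (Suc t)
      thus ?case using stp[of t] by simp
    qed
    have stp2: "\<eta> t / 4 * a t \<le> Ef t - Ef (Suc t) + L * (\<eta> t)\<^sup>2 * (real K * \<Gamma> + real K * \<delta> \<rho>) + \<eta> t / 2 * (real K * \<delta> \<rho>)"
      if "t < T" for t using stp[OF that Fint] that by simp
    have "(\<Sum>t<T. \<eta> t / 4 * a t) \<le> (\<Sum>t<T. (Ef t - Ef (Suc t)) + L * (\<eta> t)\<^sup>2 * (real K * \<Gamma> + real K * \<delta> \<rho>) + \<eta> t / 2 * (real K * \<delta> \<rho>))"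
      by (intro sum_mono stp2) simp
    also have "\<dots> = (\<Sum>t<T. Ef t - Ef (Suc t)) + L * S2 * (real K * \<Gamma> + real K * \<delta> \<rho>) + S / 2 * (real K * \<delta> \<rho>)"
      unfolding S_def S2_def by (simp add: sum.distrib sum_distrib_left sum_distrib_right sum_divide_distrib)
    also have "(\<Sum>t<T. Ef t - Ef (Suc t)) = Ef 0 - Ef T"
      using sum_lessThan_telescope'[of Ef T] by simp
    finally have sum1: "(\<Sum>t<T. \<eta> t / 4 * a t) \<le> Ef 0 - Ef T + L * S2 * (real K * \<Gamma> + real K * \<delta> \<rho>) + S / 2 * (real K * \<delta> \<rho>)" .
    have Ef0: "Ef 0 = F \<theta>0"
    proof -
      have "Ef 0 = (\<integral>\<omega>. F \<theta>0 \<partial>M)" unfolding Ef_def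
        by (rule Bochner_Integration.integral_cong) (use init in auto)
      also have "\<dots> = F \<theta>0" by (simp add: prob_space)
      finally show ?thesis .
    qed
    have EfT: "Ef T \<ge> 0" unfolding Ef_def by (rule Bochner_Integration.integral_nonneg) (simp add: F_nonneg)
    have "Min (a ` {..<T}) * S = (\<Sum>t<T. \<eta> t * Min (a ` {..<T}))" unfolding S_def sum_distrib_right[symmetric]
      by (rule mult.commute)
    also have "\<dots> \<le> (\<Sum>t<T. \<eta> t * a t)"
      using lr minle by (intro sum_mono mult_left_mono) auto
    also have "\<dots> = 4 * (\<Sum>t<T. \<eta> t / 4 * a t)" by (simp add: sum_distrib_left)
    finally have c1: "Min (a ` {..<T}) * S \<le> 4 * (\<Sum>t<T. \<eta> t / 4 * a t)" .
    have s3: "(\<Sum>t<T. \<eta> t / 4 * a t) \<le> F \<theta>0 + L * S2 * (real K * \<Gamma> + real K * \<delta> \<rho>) + S / 2 * (real K * \<delta> \<rho>)"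
      using sum1 Ef0 EfT by linarith
    have "Min (a ` {..<T}) * S \<le> 4 * (F \<theta>0 + L * S2 * (real K * \<Gamma> + real K * \<delta> \<rho>) + S / 2 * (real K * \<delta> \<rho>))"
      by (rule order_trans[OF c1 mult_left_mono[OF s3]]) simp
    hence "Min (a ` {..<T}) \<le> 4 * (F \<theta>0 + L * S2 * (real K * \<Gamma> + real K * \<delta> \<rho>) + S / 2 * (real K * \<delta> \<rho>)) / S"
      using Spos by (simp add: pos_le_divide_eq)
    also have "\<dots> = 4 * F \<theta>0 / S + 4 * S2 / S * (real K * L * \<Gamma> + real K * L * \<delta> \<rho>) + 2 * real K * \<delta> \<rho>"
      using Spos by (simp add: field_simps)
    finally show ?thesis unfolding a_def S_def S2_def .
  qed
qed

end
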